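(* Let $A\in\mathcal{M}_n(\mathbb{H})$ be an upper triangular nilpotent matrix that is cycle-free. Then $W(A)$ is a closed disk $\mathbb{D}_{\mathbb{H}}(0,r)$ centered at the origin, for some $r\ge0$.
   Context: $\mathbb{H}$ denotes the real quaternions. The numerical range of $A\in\mathcal{M}_n(\mathbb{H})$ is $W(A)=\{\mathbf{x}^*A\mathbf{x}:\mathbf{x}\in\mathbb{H}^n,\ \mathbf{x}^*\mathbf{x}=1\}$. $\mathbb{D}_{\mathbb{H}}(c,r)=\{q\in\mathbb{H}:|q-c|\le r\}$. The graph $\mathcal{G}_A$ of $A=[a_{ij}]$ is the undirected graph on $\{1,\dots,n\}$ with an edge between $i$ and $j$ (a loop if $i=j$) whenever $a_{ij}\ne0$ or $a_{ji}\ne0$; $A$ is cycle-free if $\mathcal{G}_A$ contains no cycle (loops count as cycles). *)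

theory Defs
  imports "HOL-Analysis.Analysis"
begin

datatype quat = Quat (qre: real) (qim1: real) (qim2: real) (qim3: real)

instantiation quat :: ab_group_add
begin
definition "0 = Quat 0 0 0 0"
definition "p + q = Quat (qre p + qre q) (qim1 p + qim1 q) (qim2 p + qim2 q) (qim3 p + qim3 q)"
definition "p - q = Quat (qre p - qre q) (qim1 p - qim1 q) (qim2 p - qim2 q) (qim3 p - qim3 q)"
definition "- q = Quat (- qre q) (- qim1 q) (- qim2 q) (- qim3 q)"
instance
  by standard (simp_all add: zero_quat_def plus_quat_def minus_quat_def uminus_quat_def)
end

instantiation quat :: "{one, times}"
begin
definition "1 = Quat 1 0 0 0"
definition "p * q = Quat
   (qre p * qre q - qim1 p * qim1 q - qim2 p * qim2 q - qim3 p * qim3 q)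
   (qre p * qim1 q + qim1 p * qre q + qim2 p * qim3 q - qim3 p * qim2 q)
   (qre p * qim2 q - qim1 p * qim3 q + qim2 p * qre q + qim3 p * qim1 q)
   (qre p * qim3 q + qim1 p * qim2 q - qim2 p * qim1 q + qim3 p * qre q)"
instance ..
end

definition qnorm :: "quat \<Rightarrow> real" where
  "qnorm q = sqrt ((qre q)\<^sup>2 + (qim1 q)\<^sup>2 + (qim2 q)\<^sup>2 + (qim3 q)\<^sup>2)"

definition qcnj :: "quat \<Rightarrow> quat" where
  "qcnj q = Quat (qre q) (- qim1 q) (- qim2 q) (- qim3 q)"

definition qdisk :: "quat \<Rightarrow> real \<Rightarrow> quat set" where
  "qdisk c r = {q. qnorm (q - c) \<le> r}"

definition qnumrange :: "nat \<Rightarrow> (nat \<Rightarrow> nat \<Rightarrow> quat) \<Rightarrow> quat set" where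
  "qnumrange n A = {(\<Sum>i<n. \<Sum>j<n. qcnj (x i) * A i j * x j) | x.
                     (\<Sum>i<n. qcnj (x i) * x i) = 1}"

definition qmat_mult :: "nat \<Rightarrow> (nat \<Rightarrow> nat \<Rightarrow> quat) \<Rightarrow> (nat \<Rightarrow> nat \<Rightarrow> quat) \<Rightarrow> nat \<Rightarrow> nat \<Rightarrow> quat" where
  "qmat_mult n A B = (\<lambda>i j. \<Sum>k<n. A i k * B k j)"

fun qmat_pow :: "nat \<Rightarrow> (nat \<Rightarrow> nat \<Rightarrow> quat) \<Rightarrow> nat \<Rightarrow> nat \<Rightarrow> nat \<Rightarrow> quat" where
  "qmat_pow n A 0 = (\<lambda>i j. if i = j then 1 else 0)"
| "qmat_pow n A (Suc k) = qmat_mult n (qmat_pow n A k) A"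

definition qnilpotent :: "nat \<Rightarrow> (nat \<Rightarrow> nat \<Rightarrow> quat) \<Rightarrow> bool" where
  "qnilpotent n A \<longleftrightarrow> (\<exists>k. \<forall>i<n. \<forall>j<n. qmat_pow n A k i j = 0)"

definition upper_triangular :: "nat \<Rightarrow> (nat \<Rightarrow> nat \<Rightarrow> quat) \<Rightarrow> bool" where
  "upper_triangular n A \<longleftrightarrow> (\<forall>i<n. \<forall>j<n. j < i \<longrightarrow> A i j = 0)"

definition qgraph_edge :: "nat \<Rightarrow> (nat \<Rightarrow> nat \<Rightarrow> quat) \<Rightarrow> nat \<Rightarrow> nat \<Rightarrow> bool" where
  "qgraph_edge n A i j \<longleftrightarrow> i < n \<and> j < n \<and> (A i j \<noteq> 0 \<or> A j i \<noteq> 0)"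

definition qgraph_has_cycle :: "nat \<Rightarrow> (nat \<Rightarrow> nat \<Rightarrow> quat) \<Rightarrow> bool" where
  "qgraph_has_cycle n A \<longleftrightarrow>
     (\<exists>i. qgraph_edge n A i i) \<or>
     (\<exists>vs. length vs \<ge> 3 \<and> distinct vs \<and>
        (\<forall>k < length vs. qgraph_edge n A (vs ! k) (vs ! ((k + 1) mod length vs))))"

definition cycle_free :: "nat \<Rightarrow> (nat \<Rightarrow> nat \<Rightarrow> quat) \<Rightarrow> bool" where
  "cycle_free n A \<longleftrightarrow> \<not> qgraph_has_cycle n A"

end

theory Submission
  imports Defs
begin


lemma quat_eqI: "qre p = qre q \<Longrightarrow> qim1 p = qim1 q \<Longrightarrow> qim2 p = qim2 q \<Longrightarrow> qim3 p = qim3 q \<Longrightarrow> p = q"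
  by (cases p; cases q) auto

lemmas quat_defs = zero_quat_def plus_quat_def minus_quat_def uminus_quat_def one_quat_def times_quat_def

instance quat :: ring_1
  by standard (auto intro!: quat_eqI simp: quat_defs algebra_simps)

definition qr :: "real \<Rightarrow> quat" where "qr r = Quat r 0 0 0"
definition qn2 :: "quat \<Rightarrow> real" where "qn2 q = (qre q)\<^sup>2 + (qim1 q)\<^sup>2 + (qim2 q)\<^sup>2 + (qim3 q)\<^sup>2"

lemma qr_comm: "qr r * q = q * qr r" by (auto intro!: quat_eqI simp: quat_defs qr_def)
lemma qr_mult: "qr a * qr b = qr (a*b)" by (auto intro!: quat_eqI simp: quat_defs qr_def)
lemma qr_add: "qr a + qr b = qr (a+b)" by (auto intro!: quat_eqI simp: quat_defs qr_def)
lemma qr_0[simp]: "qr 0 = 0" by (auto intro!: quat_eqI simp: quat_defs qr_def)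
lemma qr_1[simp]: "qr 1 = 1" by (auto intro!: quat_eqI simp: quat_defs qr_def)
lemma qr_sum: "(\<Sum>i\<in>I. qr (f i)) = qr (\<Sum>i\<in>I. f i)"
  by (induction I rule: infinite_finite_induct) (auto simp: qr_add)
lemma qr_inj: "qr a = qr b \<longleftrightarrow> a = b" by (auto simp: qr_def)
lemma qcnj_mult: "qcnj (p*q) = qcnj q * qcnj p" by (auto intro!: quat_eqI simp: quat_defs qcnj_def algebra_simps)
lemma qcnj_qr[simp]: "qcnj (qr r) = qr r" by (auto intro!: quat_eqI simp: qcnj_def qr_def)
lemma qcnj_cnj[simp]: "qcnj (qcnj q) = q" by (auto intro!: quat_eqI simp: qcnj_def)
lemma qcnj_left: "qcnj q * q = qr (qn2 q)" by (auto intro!: quat_eqI simp: quat_defs qcnj_def qr_def qn2_def power2_eq_square algebra_simps)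
lemma qcnj_right: "q * qcnj q = qr (qn2 q)" by (auto intro!: quat_eqI simp: quat_defs qcnj_def qr_def qn2_def power2_eq_square algebra_simps)
lemma qn2_nonneg: "qn2 q \<ge> 0" by (simp add: qn2_def)
lemma qnorm_qn2: "qnorm q = sqrt (qn2 q)" by (simp add: qnorm_def qn2_def)
lemma qn2_qnorm: "qn2 q = (qnorm q)\<^sup>2" by (simp add: qnorm_qn2 qn2_nonneg)
lemma qn2_mult: "qn2 (p*q) = qn2 p * qn2 q" by (simp add: qn2_def quat_defs power2_eq_square algebra_simps)
lemma qnorm_mult: "qnorm (p*q) = qnorm p * qnorm q" by (simp add: qnorm_qn2 qn2_mult real_sqrt_mult)
lemma qnorm_nonneg: "qnorm q \<ge> 0" by (simp add: qnorm_def)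
lemma qnorm_qr: "qnorm (qr r) = \<bar>r\<bar>" by (simp add: qnorm_def qr_def)
lemma qnorm_eq0: "qnorm q = 0 \<longleftrightarrow> q = 0"
  by (cases q) (auto simp: qnorm_def zero_quat_def add_nonneg_eq_0_iff add_nonneg_nonneg)
lemma qnorm_cnj: "qnorm (qcnj q) = qnorm q" by (simp add: qnorm_def qcnj_def)
lemma qn2_eq0: "qn2 q = 0 \<longleftrightarrow> q = 0"
  by (metis qn2_qnorm qnorm_eq0 zero_eq_power2)

definition emb :: "quat \<Rightarrow> (real \<times> real) \<times> (real \<times> real)" where
  "emb q = ((qre q, qim1 q), (qim2 q, qim3 q))"
lemma qnorm_emb: "qnorm q = norm (emb q)"
  by (simp add: qnorm_def emb_def norm_Pair add.assoc)
lemma emb_add: "emb (p + q) = emb p + emb q" by (simp add: emb_def plus_quat_def)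
lemma qnorm_triangle: "qnorm (p + q) \<le> qnorm p + qnorm q"
  by (simp add: qnorm_emb emb_add norm_triangle_ineq)
lemma qnorm_sum: "qnorm (\<Sum>i\<in>I. f i) \<le> (\<Sum>i\<in>I. qnorm (f i))"
proof (induction I rule: infinite_finite_induct)
  case (insert x F)
  then show ?case using qnorm_triangle[of "f x" "sum f F"] by simp
qed (auto simp: qnorm_def zero_quat_def)



lemma edge_sym: "qgraph_edge n A i j = qgraph_edge n A j i"
  by (auto simp: qgraph_edge_def)

lemma leaf_exists:
  assumes nc: "\<not> qgraph_has_cycle n A" and fin: "finite V" and ne: "V \<noteq> {}"
  shows "\<exists>l\<in>V. \<forall>u\<in>V. \<forall>w\<in>V. qgraph_edge n A l u \<and> qgraph_edge n A l w \<and> u \<noteq> l \<and> w \<noteq> l \<longrightarrow> u = w"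
proof (rule ccontr)
  let ?E = "qgraph_edge n A"
  assume "\<not> ?thesis"
  hence two: "\<forall>l\<in>V. \<exists>u\<in>V. \<exists>w\<in>V. ?E l u \<and> ?E l w \<and> u \<noteq> l \<and> w \<noteq> l \<and> u \<noteq> w" by blast
  define path where "path p \<longleftrightarrow> p \<noteq> [] \<and> distinct p \<and> set p \<subseteq> V \<and> (\<forall>k. Suc k < length p \<longrightarrow> ?E (p!k) (p!Suc k))" for p
  have "\<exists>p. path p \<and> length p = Suc m" for m
  proof (induction m)
    case 0
    from ne obtain x where "x \<in> V" by blast
    then show ?case by (intro exI[of _ "[x]"]) (auto simp: path_def)
  next
    case (Suc m)
    then obtain p where p: "path p" "length p = Suc m" by blast
    let ?h = "p!0"
    have hV: "?h \<in> V" using p by (auto simp: path_def)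
    obtain z where z: "z \<in> V" "?E ?h z" "z \<noteq> ?h" "m \<ge> 1 \<longrightarrow> z \<noteq> p!1"
      using two hV by metis
    show ?case
    proof (cases "z \<in> set p")
      case False
      have "?E ((z#p)!k) ((z#p)!Suc k)" if "Suc k < length (z#p)" for k
      proof (cases k)
        case 0 then show ?thesis using z p by (simp add: edge_sym[of n A z])
      next
        case (Suc k') then show ?thesis using that p by (simp add: path_def)
      qed
      then have "path (z # p)" using p z False unfolding path_def by auto
      then show ?thesis using p by (intro exI[of _ "z#p"]) auto
    next
      case True
      then obtain k where k: "k < Suc m" "p!k = z" using p by (metis in_set_conv_nth)
      have "k \<noteq> 0" using z(3) k(2) by (metis)
      moreover have "k \<noteq> 1"
      proof
        assume "k = 1" then have "m \<ge> 1" "z = p!1" using k by auto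
        then show False using z by simp
      qed
      ultimately have k2: "k \<ge> 2" by auto
      define vs where "vs = take (Suc k) p"
      have lv: "length vs = Suc k" using k p by (simp add: vs_def)
      have "qgraph_has_cycle n A"
        unfolding qgraph_has_cycle_def
      proof (rule disjI2, rule exI[of _ vs], intro conjI allI impI)
        show "3 \<le> length vs" using lv k2 by simp
        show "distinct vs" using p by (simp add: vs_def path_def)
        fix j assume j: "j < length vs"
        show "?E (vs!j) (vs!((j+1) mod length vs))"
        proof (cases "j = k")
          case True
          then show ?thesis using lv k z by (simp add: vs_def edge_sym)
        next
          case False
          then have "Suc j < Suc k" using j lv by simp
          then show ?thesis using lv p k j unfolding path_def vs_def by auto
        qed
      qed
      then show ?thesis using nc by blast
    qed
  qed
  then obtain p where p: "path p" "length p = Suc (card V)" by blast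
  then have "card (set p) = Suc (card V)" by (simp add: path_def distinct_card)
  moreover have "card (set p) \<le> card V" using p fin by (intro card_mono) (auto simp: path_def)
  ultimately show False by simp
qed


lemma qn2_qr: "qn2 (qr r) = r\<^sup>2" by (simp add: qn2_def qr_def)
lemma qn2_cnj: "qn2 (qcnj q) = qn2 q" by (simp add: qn2_def qcnj_def)

lemma qr_inv_sq: assumes "a \<noteq> 0" shows "qr (1 / qnorm a) * qr (qn2 a) = qr (qnorm a)"
proof -
  have "qnorm a \<noteq> 0" using assms qnorm_eq0 by auto
  then show ?thesis by (simp add: qr_mult qn2_qnorm power2_eq_square)
qed

lemma form1:
  assumes w: "qn2 w = 1" and a: "a \<noteq> 0"
  shows "qcnj w * a * (qr (1 / qnorm a) * qcnj a * w * v) = qr (qnorm a) * v"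
proof -
  have "qcnj w * a * (qr (1 / qnorm a) * qcnj a * w * v) = qcnj w * (qr (1 / qnorm a) * (a * qcnj a)) * w * v"
    by (simp add: mult.assoc qr_comm)
  also have "\<dots> = qcnj w * qr (qnorm a) * w * v" using qr_inv_sq[OF a] by (simp add: qcnj_right)
  also have "\<dots> = qr (qnorm a) * (qcnj w * w) * v" by (simp add: mult.assoc qr_comm)
  also have "\<dots> = qr (qnorm a) * v" using w by (simp add: qcnj_left)
  finally show ?thesis .
qed

lemma form2:
  assumes w: "qn2 w = 1" and a: "a \<noteq> 0"
  shows "qcnj (qr (1 / qnorm a) * a * w * qcnj v) * a * w = qr (qnorm a) * v"
proof -
  have "qcnj (qr (1 / qnorm a) * a * w * qcnj v) * a * w = v * qcnj w * (qr (1 / qnorm a) * (qcnj a * a)) * w"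
    by (simp add: qcnj_mult mult.assoc qr_comm)
  also have "\<dots> = v * qcnj w * qr (qnorm a) * w" using qr_inv_sq[OF a] by (simp add: qcnj_left)
  also have "\<dots> = qr (qnorm a) * v * (qcnj w * w)" by (simp add: mult.assoc qr_comm)
  also have "\<dots> = qr (qnorm a) * v" using w by (simp add: qcnj_left)
  finally show ?thesis .
qed

lemma unit1: assumes "qn2 w = 1" "qn2 v = 1" "a \<noteq> 0" shows "qn2 (qr (1 / qnorm a) * qcnj a * w * v) = 1"
  using assms qnorm_eq0[of a] by (simp add: qn2_mult qn2_qr qn2_cnj qn2_qnorm[of a] power_divide)
lemma unit2: assumes "qn2 w = 1" "qn2 v = 1" "a \<noteq> 0" shows "qn2 (qr (1 / qnorm a) * a * w * qcnj v) = 1"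
  using assms qnorm_eq0[of a] by (simp add: qn2_mult qn2_qr qn2_cnj qn2_qnorm[of a] power_divide)

lemma qnorm_0[simp]: "qnorm 0 = 0" by (simp add: qnorm_eq0)
lemma zero_side: "qcnj x * 0 * y = qr (qnorm 0) * v"
  by simp

lemma forest_assign:
  assumes nc: "\<not> qgraph_has_cycle n A"
    and ut: "\<forall>i<n. \<forall>j<n. i \<noteq> j \<longrightarrow> A i j = 0 \<or> A j i = 0"
    and fin: "finite V" and sub: "V \<subseteq> {..<n}" and v: "qn2 v = 1"
  shows "\<exists>e. (\<forall>i\<in>V. qn2 (e i) = 1) \<and> (\<forall>i\<in>V. \<forall>j\<in>V. qcnj (e i) * A i j * e j = qr (qnorm (A i j)) * v)"
  using fin sub
proof (induction V rule: finite_remove_induct)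
  case empty
  then show ?case by auto
next
  case (remove V)
  let ?E = "qgraph_edge n A"
  have diag: "A i i = 0" if "i < n" for i
    using nc that by (auto simp: qgraph_has_cycle_def qgraph_edge_def)
  obtain l where l: "l \<in> V" and leaf: "\<forall>u\<in>V. \<forall>w\<in>V. ?E l u \<and> ?E l w \<and> u \<noteq> l \<and> w \<noteq> l \<longrightarrow> u = w"
    using leaf_exists[OF nc remove(1,2)] by blast
  obtain e where eu: "\<forall>i\<in>V-{l}. qn2 (e i) = 1"
    and ec: "\<forall>i\<in>V-{l}. \<forall>j\<in>V-{l}. qcnj (e i) * A i j * e j = qr (qnorm (A i j)) * v"
    using remove(4)[OF l] remove(5) by blast
  have ln: "l < n" using l remove(5) by auto
  show ?case
  proof (cases "\<exists>u\<in>V. u \<noteq> l \<and> ?E l u")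
    case True
    then obtain u where u: "u \<in> V" "u \<noteq> l" "?E l u" by blast
    have un: "u < n" using u remove(5) by auto
    have uniq: "w = u" if "w \<in> V" "w \<noteq> l" "?E l w" for w using leaf u that by blast
    have uu: "qn2 (e u) = 1" using eu u by auto
    define el where "el = (if A u l \<noteq> 0 then qr (1 / qnorm (A u l)) * qcnj (A u l) * e u * v
                           else qr (1 / qnorm (A l u)) * A l u * e u * qcnj v)"
    have Aor: "A u l \<noteq> 0 \<or> A l u \<noteq> 0" using u(3) by (auto simp: qgraph_edge_def)
    have el1: "qn2 el = 1" using Aor unit1[OF uu v] unit2[OF uu v] by (auto simp: el_def)
    define e' where "e' = e(l := el)"
    have c: "qcnj (e' i) * A i j * e' j = qr (qnorm (A i j)) * v" if ij: "i \<in> V" "j \<in> V" for i j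
    proof (cases "A i j = 0")
      case True then show ?thesis by (simp add: zero_side)
    next
      case False
      show ?thesis
      proof (cases "i = l")
        case il: True
        show ?thesis
        proof (cases "j = l")
          case True then show ?thesis using il diag[OF ln] False by simp
        next
          case jl: False
          have "?E l j" using False il ij remove(5) by (auto simp: qgraph_edge_def)
          then have ju: "j = u" using uniq ij jl by blast
          have "A u l = 0" using ut un ln u(2) False il ju by blast
          then show ?thesis using il ju form2[OF uu False[unfolded il ju]] u(2)
            by (simp add: e'_def el_def)
        qed
      next
        case inl: False
        show ?thesis
        proof (cases "j = l")
          case jl: True
          have "?E l i" using False jl ij remove(5) by (auto simp: qgraph_edge_def)
          then have iu: "i = u" using uniq ij inl by blast
          then show ?thesis using jl form1[OF uu False[unfolded iu jl]] u(2)
            by (simp add: e'_def el_def False[unfolded iu jl])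
        next
          case False
          then show ?thesis using ec inl ij by (simp add: e'_def)
        qed
      qed
    qed
    have "\<forall>i\<in>V. qn2 (e' i) = 1" using eu el1 by (auto simp: e'_def)
    then show ?thesis using c by blast
  next
    case False
    define e' where "e' = e(l := 1)"
    have c: "qcnj (e' i) * A i j * e' j = qr (qnorm (A i j)) * v" if ij: "i \<in> V" "j \<in> V" for i j
    proof (cases "A i j = 0")
      case True then show ?thesis by (simp add: zero_side)
    next
      case Aij: False
      have "i \<noteq> l \<and> j \<noteq> l"
      proof (rule ccontr)
        assume "\<not> (i \<noteq> l \<and> j \<noteq> l)"
        then consider "i = l" "j = l" | "i = l" "j \<noteq> l" | "i \<noteq> l" "j = l" by blast
        then show False
        proof cases
          case 1 then show False using diag[OF ln] Aij by simp
        next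
          case 2 then show False using False Aij ij remove(5) by (auto simp: qgraph_edge_def)
        next
          case 3 then show False using False Aij ij remove(5) by (auto simp: qgraph_edge_def)
        qed
      qed
      then show ?thesis using ec ij by (simp add: e'_def)
    qed
    have "\<forall>i\<in>V. qn2 (e' i) = 1" using eu by (auto simp: e'_def qn2_def one_quat_def)
    then show ?thesis using c by blast
  qed
qed


lemma compact_max:
  fixes a :: "nat \<Rightarrow> nat \<Rightarrow> real" assumes n: "n \<ge> 1"
  shows "\<exists>s0. (\<forall>i<n. 0 \<le> s0 i \<and> s0 i \<le> 1) \<and> (\<Sum>i<n. s0 i * s0 i) = 1 \<and>
     (\<forall>s. (\<forall>i<n. 0 \<le> s i \<and> s i \<le> 1) \<and> (\<Sum>i<n. s i * s i) = 1 \<longrightarrow>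
        (\<Sum>i<n. \<Sum>j<n. a i j * s i * s j) \<le> (\<Sum>i<n. \<Sum>j<n. a i j * s0 i * s0 j))"
proof -
  define X where "X = product_topology (\<lambda>_. euclideanreal) {..<n}"
  define h where "h = (\<lambda>s::nat\<Rightarrow>real. \<Sum>i<n. s i * s i)"
  define f where "f = (\<lambda>s::nat\<Rightarrow>real. \<Sum>i<n. \<Sum>j<n. a i j * s i * s j)"
  define K where "K = {x \<in> topspace X. h x \<in> {1}} \<inter> PiE {..<n} (\<lambda>_. {0..1::real})"
  have c1: "compactin X (PiE {..<n} (\<lambda>_. {0..1::real}))"
    unfolding X_def by (simp add: compactin_PiE)
  have ch: "continuous_map X euclideanreal h"
    unfolding X_def h_def by (intro continuous_intros) auto
  have cf: "continuous_map X euclideanreal f"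
    unfolding X_def f_def by (intro continuous_intros) auto
  have "closedin X {x \<in> topspace X. h x \<in> {1}}"
    by (rule closedin_continuous_map_preimage[OF ch]) simp
  then have cK: "compactin X K" unfolding K_def using c1 by (rule closed_Int_compactin)
  then have "compactin euclideanreal (f ` K)" using cf by (rule image_compactin)
  then have cfK: "compact (f ` K)" by simp
  define e0 where "e0 = restrict (\<lambda>i. if i = 0 then 1::real else 0) {..<n}"
  have "h e0 = (\<Sum>i<n. if i = 0 then 1 else 0)" unfolding h_def e0_def by (intro sum.cong) auto
  also have "\<dots> = 1" using n by simp
  finally have "e0 \<in> K" unfolding K_def X_def e0_def by (auto simp: restrict_PiE_iff)
  then have "f ` K \<noteq> {}" by auto
  from compact_attains_sup[OF cfK this] obtain s0 where s0: "s0 \<in> K" "\<forall>s\<in>K. f s \<le> f s0" by auto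
  have memK: "restrict s {..<n} \<in> K" if "\<forall>i<n. 0 \<le> s i \<and> s i \<le> 1" "h s = 1" for s
  proof -
    have "h (restrict s {..<n}) = h s" unfolding h_def by simp
    then show ?thesis using that unfolding K_def X_def by (auto simp: restrict_PiE_iff)
  qed
  have fr: "f (restrict s {..<n}) = f s" for s unfolding f_def by simp
  have A: "\<forall>i<n. 0 \<le> s0 i \<and> s0 i \<le> 1" using s0(1) by (auto simp: K_def PiE_iff)
  have B: "(\<Sum>i<n. s0 i * s0 i) = 1" using s0(1) by (auto simp: K_def h_def)
  have C: "(\<Sum>i<n. \<Sum>j<n. a i j * s i * s j) \<le> (\<Sum>i<n. \<Sum>j<n. a i j * s0 i * s0 j)"
    if "(\<forall>i<n. 0 \<le> s i \<and> s i \<le> 1) \<and> (\<Sum>i<n. s i * s i) = 1" for s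
  proof -
    have "restrict s {..<n} \<in> K" using that memK h_def by auto
    then have "f (restrict s {..<n}) \<le> f s0" using s0(2) by blast
    then have "f s \<le> f s0" using fr[of s] by simp
    then show ?thesis by (simp add: f_def)
  qed
  show ?thesis using A B C by blast
qed


lemma ivt_values:
  fixes a :: "nat \<Rightarrow> nat \<Rightarrow> real"
  assumes n: "n \<ge> 1" and s0: "\<forall>i<n. 0 \<le> s0 i \<and> s0 i \<le> 1" "(\<Sum>i<n. s0 i * s0 i) = 1"
    and diag: "a (n-1) (n-1) = 0" and y: "0 \<le> y" "y \<le> (\<Sum>i<n. \<Sum>j<n. a i j * s0 i * s0 j)"
  shows "\<exists>s. (\<Sum>i<n. s i * s i) = 1 \<and> (\<Sum>i<n. \<Sum>j<n. a i j * s i * s j) = y"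
proof -
  define d where "d i = (if i = n-1 then 1::real else 0)" for i
  define p where "p t i = (1-t) * s0 i + t * d i" for t i
  define H where "H t = (\<Sum>i<n. p t i * p t i)" for t
  define F where "F t = (\<Sum>i<n. \<Sum>j<n. a i j * p t i * p t j)" for t
  have nn: "n - 1 \<in> {..<n}" using n by auto
  have Hpos: "H t > 0" if t: "0 \<le> t" "t \<le> 1" for t
  proof (cases "t = 0")
    case True then show ?thesis using s0 by (simp add: H_def p_def)
  next
    case False
    have "p t (n-1) \<ge> t" using s0 n t by (simp add: p_def d_def)
    then have "0 < p t (n-1) * p t (n-1)" using t False by (simp add: mult_pos_pos)
    also have "\<dots> \<le> H t" unfolding H_def
      by (rule member_le_sum[OF nn]) (simp_all add: p_def d_def s0 t)
    finally show ?thesis .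
  qed
  define g where "g t = F t / H t" for t
  have g0: "g 0 = (\<Sum>i<n. \<Sum>j<n. a i j * s0 i * s0 j)" using s0 by (simp add: g_def F_def H_def p_def)
  have p1: "p 1 = d" by (auto simp: p_def fun_eq_iff)
  have "F 1 = (\<Sum>i<n. \<Sum>j<n. if i = n-1 \<and> j = n-1 then a i j else 0)"
    unfolding F_def p1 d_def by (intro sum.cong refl) auto
  also have "\<dots> = 0" using diag by (simp add: sum.If_cases)
  finally have g1: "g 1 = 0" by (simp add: g_def)
  have cont: "continuous_on {0..1} g"
    unfolding g_def F_def H_def p_def using Hpos unfolding H_def p_def
    by (intro continuous_intros) (auto simp: less_le)
  have "\<exists>x. 0 \<le> x \<and> x \<le> 1 \<and> g x = y"
    by (rule IVT2') (use g0 g1 y cont in auto)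
  then obtain t where t: "0 \<le> t" "t \<le> 1" "g t = y" by blast
  have Ht: "H t > 0" using Hpos t by auto
  define s where "s i = p t i / sqrt (H t)" for i
  have ss: "s i * s j = p t i * p t j / H t" for i j
  proof -
    have "sqrt (H t) * sqrt (H t) = H t" using Ht by simp
    then show ?thesis by (simp add: s_def)
  qed
  have "(\<Sum>i<n. s i * s i) = (\<Sum>i<n. p t i * p t i / H t)" by (simp add: ss)
  also have "\<dots> = (\<Sum>i<n. p t i * p t i) / H t" by (rule sum_divide_distrib[symmetric])
  also have "\<dots> = 1" using Ht unfolding H_def by simp
  finally have 1: "(\<Sum>i<n. s i * s i) = 1" .
  have "(\<Sum>i<n. \<Sum>j<n. a i j * s i * s j) = (\<Sum>i<n. \<Sum>j<n. a i j * p t i * p t j / H t)"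
    by (intro sum.cong refl) (simp add: mult.assoc ss)
  also have "\<dots> = g t" by (simp add: g_def F_def sum_divide_distrib)
  finally show ?thesis using 1 t by blast
qed


lemma key_mult: "qcnj (qr a * e) * B * (qr b * f) = qr (a*b) * (qcnj e * B * f)"
  by (auto intro!: quat_eqI simp: quat_defs qcnj_def qr_def algebra_simps)

lemma qn2_sum_one:
  assumes "(\<Sum>i<n. qcnj (x i) * x i) = 1" shows "(\<Sum>i<n. qn2 (x i)) = 1"
proof -
  have "qr (\<Sum>i<n. qn2 (x i)) = (\<Sum>i<n. qcnj (x i) * x i)" by (simp add: qr_sum[symmetric] qcnj_left)
  then have "qr (\<Sum>i<n. qn2 (x i)) = qr 1" using assms by simp
  then show ?thesis by (metis qr_1 qr_inj)
qed

theorem corollary3p7: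
  fixes n :: nat and A :: "nat \<Rightarrow> nat \<Rightarrow> quat"
  assumes "n \<ge> 1"
    and "upper_triangular n A"
    and "qnilpotent n A"
    and "cycle_free n A"
  shows "\<exists>r::real. r \<ge> 0 \<and> qnumrange n A = qdisk 0 r"
proof -
  note n = assms(1)
  have nc: "\<not> qgraph_has_cycle n A" using assms(4) by (simp add: cycle_free_def)
  have diag: "A i i = 0" if "i < n" for i
    using nc that by (auto simp: qgraph_has_cycle_def qgraph_edge_def)
  have ut: "\<forall>i<n. \<forall>j<n. i \<noteq> j \<longrightarrow> A i j = 0 \<or> A j i = 0"
    using assms(2) unfolding upper_triangular_def by (metis linorder_neqE_nat)
  define a where "a i j = qnorm (A i j)" for i j
  obtain s0 where s0: "\<forall>i<n. 0 \<le> s0 i \<and> s0 i \<le> 1" "(\<Sum>i<n. s0 i * s0 i) = 1"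
    and smax: "\<And>s. (\<forall>i<n. 0 \<le> s i \<and> s i \<le> 1) \<and> (\<Sum>i<n. s i * s i) = 1 \<Longrightarrow>
        (\<Sum>i<n. \<Sum>j<n. a i j * s i * s j) \<le> (\<Sum>i<n. \<Sum>j<n. a i j * s0 i * s0 j)"
    using compact_max[OF n, of a] by blast
  define r where "r = (\<Sum>i<n. \<Sum>j<n. a i j * s0 i * s0 j)"
  have r0: "r \<ge> 0" unfolding r_def a_def using s0(1)
    by (intro sum_nonneg) (simp add: qnorm_nonneg)
  have sub1: "qnumrange n A \<subseteq> qdisk 0 r"
  proof
    fix q assume "q \<in> qnumrange n A"
    then obtain x where q: "q = (\<Sum>i<n. \<Sum>j<n. qcnj (x i) * A i j * x j)"
      and x1: "(\<Sum>i<n. qcnj (x i) * x i) = 1" unfolding qnumrange_def by blast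
    have sx: "(\<Sum>i<n. qn2 (x i)) = 1" using qn2_sum_one[OF x1] .
    define s where "s i = qnorm (x i)" for i
    have ss: "s i * s i = qn2 (x i)" for i by (simp add: s_def qn2_qnorm power2_eq_square)
    have sle: "0 \<le> s i \<and> s i \<le> 1" if "i < n" for i
    proof -
      have "qn2 (x i) \<le> 1" using sx member_le_sum[of i "{..<n}" "\<lambda>i. qn2 (x i)"] that qn2_nonneg by auto
      then have "s i * s i \<le> 1" using ss by simp
      moreover have "0 \<le> s i" by (simp add: s_def qnorm_nonneg)
      moreover have "s i \<le> 1"
      proof (rule ccontr)
        assume "\<not> s i \<le> 1" then have "1 < s i" by simp
        then have "1 * 1 < s i * s i" by (intro mult_strict_mono) auto
        then show False using \<open>s i * s i \<le> 1\<close> by simp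
      qed
      ultimately show ?thesis by simp
    qed
    have "qnorm q \<le> (\<Sum>i<n. qnorm (\<Sum>j<n. qcnj (x i) * A i j * x j))" unfolding q by (rule qnorm_sum)
    also have "\<dots> \<le> (\<Sum>i<n. \<Sum>j<n. qnorm (qcnj (x i) * A i j * x j))" by (intro sum_mono qnorm_sum)
    also have "\<dots> = (\<Sum>i<n. \<Sum>j<n. a i j * s i * s j)"
      by (simp add: qnorm_mult qnorm_cnj a_def s_def mult.commute mult.left_commute)
    also have "\<dots> \<le> r" unfolding r_def using smax sle ss sx by simp
    finally show "q \<in> qdisk 0 r" by (simp add: qdisk_def)
  qed
  have sub2: "qdisk 0 r \<subseteq> qnumrange n A"
  proof
    fix q assume "q \<in> qdisk 0 r"
    then have qr_le: "qnorm q \<le> r" by (simp add: qdisk_def)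
    have ann: "a (n-1) (n-1) = 0" using diag[of "n-1"] n by (simp add: a_def)
    obtain s where s1: "(\<Sum>i<n. s i * s i) = 1" and sf: "(\<Sum>i<n. \<Sum>j<n. a i j * s i * s j) = qnorm q"
      using ivt_values[of n s0 a "qnorm q"] n s0 ann qr_le qnorm_nonneg unfolding r_def by blast
    define v where "v = (if q = 0 then 1 else qr (1 / qnorm q) * q)"
    have v1: "qn2 v = 1"
    proof (cases "q = 0")
      case True then show ?thesis by (simp add: v_def qn2_def one_quat_def)
    next
      case False then have "qnorm q \<noteq> 0" by (simp add: qnorm_eq0)
      then show ?thesis using False by (simp add: v_def qn2_mult qn2_qr qn2_qnorm[of q] power_divide)
    qed
    have qv: "q = qr (qnorm q) * v"
    proof (cases "q = 0")
      case True then show ?thesis by simp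
    next
      case False then have "qnorm q \<noteq> 0" by (simp add: qnorm_eq0)
      then show ?thesis using False by (simp add: v_def mult.assoc[symmetric] qr_mult)
    qed
    obtain e where eu: "\<forall>i\<in>{..<n}. qn2 (e i) = 1"
      and ec: "\<forall>i\<in>{..<n}. \<forall>j\<in>{..<n}. qcnj (e i) * A i j * e j = qr (qnorm (A i j)) * v"
      using forest_assign[OF nc ut _ _ v1, of "{..<n}"] by auto
    define x where "x i = qr (s i) * e i" for i
    have "(\<Sum>i<n. qcnj (x i) * x i) = (\<Sum>i<n. qr (s i * s i))"
    proof (intro sum.cong refl)
      fix i assume "i \<in> {..<n}"
      have "qcnj (x i) * x i = qcnj (qr (s i) * e i) * 1 * (qr (s i) * e i)" by (simp add: x_def)
      also have "\<dots> = qr (s i * s i) * (qcnj (e i) * e i)" by (simp only: key_mult) simp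
      also have "\<dots> = qr (s i * s i)" using eu \<open>i \<in> {..<n}\<close> by (simp add: qcnj_left)
      finally show "qcnj (x i) * x i = qr (s i * s i)" .
    qed
    then have x1: "(\<Sum>i<n. qcnj (x i) * x i) = 1" using s1 by (simp add: qr_sum)
    have "(\<Sum>i<n. \<Sum>j<n. qcnj (x i) * A i j * x j) = (\<Sum>i<n. \<Sum>j<n. qr (a i j * s i * s j) * v)"
    proof (intro sum.cong refl)
      fix i j assume ij: "i \<in> {..<n}" "j \<in> {..<n}"
      have "qcnj (x i) * A i j * x j = qr (s i * s j) * (qcnj (e i) * A i j * e j)"
        by (simp add: x_def key_mult)
      also have "\<dots> = qr (s i * s j) * (qr (a i j) * v)" using ec ij by (simp add: a_def)
      also have "\<dots> = qr (a i j * s i * s j) * v" by (simp add: mult.assoc[symmetric] qr_mult) (simp add: ac_simps)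
      finally show "qcnj (x i) * A i j * x j = qr (a i j * s i * s j) * v" .
    qed
    also have "\<dots> = qr (\<Sum>i<n. \<Sum>j<n. a i j * s i * s j) * v"
      by (simp add: qr_sum[symmetric] sum_distrib_right)
    also have "\<dots> = q" using sf qv by simp
    finally show "q \<in> qnumrange n A" unfolding qnumrange_def using x1 by blast
  qed
  show ?thesis using sub1 sub2 r0 by blast
qed

end
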